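(* Let $x\in\mathbb{R}$ and let $f:\mathbb{R}\to\mathbb{R}$ be analytic and nonzero on the closed interval between $0$ and $x$, with $f(0)=1$, and suppose $f(y)=\exp\big(\sum_{i=1}^{\infty}c_i y^i\big)$ for all $y$ in that interval, the series converging there. For each positive integer $i$ put $f_i(y)=\exp(c_i y^i)$. Then for every positive integer $k$, \[ f_k(x)=\lim_{r\downarrow 1}\prod_{n=1}^{\infty}\left[ f\!\left(\frac{(r^k-1)^{1/k}x}{r^n}\right)\Big/\prod_{i<k} f_i\!\left(\frac{(r^k-1)^{1/k}x}{r^n}\right)\right]. \]
   Context: The coefficients $c_i$ are the Taylor coefficients at $0$ of $\log f$, so that $f=\prod_{i\ge1}f_i$; $f_i$ is called the $i$-th component of $f$. The product over $i<k$ runs over positive integers $i<k$. *)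

theory Defs
  imports "HOL-Analysis.Analysis"
begin

definition real_analytic_on :: "(real \<Rightarrow> real) \<Rightarrow> real set \<Rightarrow> bool" where
  "real_analytic_on f S \<longleftrightarrow>
     (\<forall>y\<in>S. \<exists>e>0. \<exists>a::nat \<Rightarrow> real.
        \<forall>z. \<bar>z - y\<bar> < e \<longrightarrow> (\<lambda>n. a n * (z - y) ^ n) sums f z)"

definition component :: "(nat \<Rightarrow> real) \<Rightarrow> nat \<Rightarrow> real \<Rightarrow> real" where
  "component c i y = exp (c i * y ^ i)"

end

theory Submission
  imports Defs
begin

lemma split_id:
  fixes c :: "nat \<Rightarrow> real"
  assumes s: "summable (\<lambda>i. c (Suc i) * z ^ Suc i)" and km: "k = Suc m"
  shows "summable (\<lambda>i. c (i + k) * z ^ (i + k))"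
    and "exp (\<Sum>i. c (Suc i) * z ^ Suc i) / (\<Prod>i\<in>{1..<k}. component c i z)
         = exp (\<Sum>i. c (i + k) * z ^ (i + k))"
proof -
  have e: "(\<lambda>i. c (Suc (i + m)) * z ^ Suc (i + m)) = (\<lambda>i. c (i + k) * z ^ (i + k))"
    using km by auto
  show "summable (\<lambda>i. c (i + k) * z ^ (i + k))"
    using summable_ignore_initial_segment[OF s, of m] e by simp
  have sp: "(\<Sum>i. c (Suc i) * z ^ Suc i) = (\<Sum>i. c (i + k) * z ^ (i + k)) + (\<Sum>i<m. c (Suc i) * z ^ Suc i)"
    using suminf_split_initial_segment[OF s, of m] e by simp
  have pr: "(\<Prod>i\<in>{1..<k}. component c i z) = exp (\<Sum>i\<in>{1..<k}. c i * z ^ i)"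
    by (simp add: component_def exp_sum)
  have sh: "(\<Sum>i\<in>{1..<k}. c i * z ^ i) = (\<Sum>i<m. c (Suc i) * z ^ Suc i)"
    unfolding km using sum.shift_bounds_Suc_ivl[of "\<lambda>i. c i * z ^ i" 0 m]
    by (simp add: lessThan_atLeast0)
  show "exp (\<Sum>i. c (Suc i) * z ^ Suc i) / (\<Prod>i\<in>{1..<k}. component c i z)
         = exp (\<Sum>i. c (i + k) * z ^ (i + k))"
    unfolding sp pr sh by (simp add: exp_add)
qed

lemma inner:
  fixes d :: "nat \<Rightarrow> real"
  assumes r: "r > 1" and k: "k \<ge> 1"
    and sb: "summable (\<lambda>i. \<bar>d i * t^(i+k) / (r^(i+k) - 1)\<bar>)"
    and sn: "\<And>n. summable (\<lambda>i. d i * (t / r^Suc n)^(i+k))"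
  shows "(\<lambda>n. \<Sum>i. d i * (t / r^Suc n)^(i+k)) sums (\<Sum>i. d i * t^(i+k) / (r^(i+k) - 1))"
proof -
  define q where "q i = 1 / r^(i+k)" for i
  have Rgt: "r^(i+k) > 1" for i
    using r k by (simp add: one_less_power)
  have q0: "0 < q i" and q1: "q i < 1" for i
    using Rgt[of i] r by (auto simp: q_def)
  have gs: "(\<lambda>n. q i ^ Suc n) sums (1 / (r^(i+k) - 1))" for i
  proof -
    have "(\<lambda>n. q i ^ n) sums (1 / (1 - q i))"
      by (rule geometric_sums) (use q0[of i] q1[of i] in simp)
    then have "(\<lambda>n. q i * q i ^ n) sums (q i * (1 / (1 - q i)))"
      by (rule sums_mult)
    moreover have "q i * (1 / (1 - q i)) = 1 / (r^(i+k) - 1)"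
      using Rgt[of i] r by (simp add: q_def field_simps)
    ultimately show ?thesis by simp
  qed
  have trm: "(t / r^Suc n)^(i+k) = t^(i+k) * q i ^ Suc n" for i n
  proof -
    have "(r^Suc n)^(i+k) = (r^(i+k))^Suc n"
      by (metis power_mult mult.commute)
    then show ?thesis by (simp add: q_def power_divide power_one_over)
  qed
  define a where "a i N = (\<Sum>n<N. d i * (t / r^Suc n)^(i+k))" for i N
  have aeq: "a i N = d i * t^(i+k) * (\<Sum>n<N. q i ^ Suc n)" for i N
    unfolding a_def trm by (simp add: sum_distrib_left mult.assoc)
  have lim: "(\<lambda>N. a i N) \<longlonglongrightarrow> d i * t^(i+k) / (r^(i+k) - 1)" for i
  proof -
    have "(\<lambda>N. \<Sum>n<N. q i ^ Suc n) \<longlonglongrightarrow> 1 / (r^(i+k) - 1)"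
      using gs[of i] by (simp add: sums_def)
    then have "(\<lambda>N. d i * t^(i+k) * (\<Sum>n<N. q i ^ Suc n)) \<longlonglongrightarrow> d i * t^(i+k) * (1 / (r^(i+k) - 1))"
      by (rule tendsto_mult_left)
    then show ?thesis unfolding aeq by simp
  qed
  have bnd: "norm (a i N) \<le> \<bar>d i * t^(i+k) / (r^(i+k) - 1)\<bar>" for i N
  proof -
    have S0: "0 \<le> (\<Sum>n<N. q i ^ Suc n)"
      using q0[of i] by (intro sum_nonneg) simp
    have "(\<Sum>n<N. q i ^ Suc n) \<le> (\<Sum>n. q i ^ Suc n)"
      by (rule sum_le_suminf) (use gs[of i] q0[of i] in \<open>auto simp: sums_iff\<close>)
    also have "\<dots> = 1 / (r^(i+k) - 1)" using gs[of i] by (simp add: sums_iff)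
    finally have S1: "(\<Sum>n<N. q i ^ Suc n) \<le> 1 / (r^(i+k) - 1)" .
    have "norm (a i N) = \<bar>d i * t^(i+k)\<bar> * (\<Sum>n<N. q i ^ Suc n)"
      unfolding aeq using S0 by (simp add: abs_mult)
    also have "\<dots> \<le> \<bar>d i * t^(i+k)\<bar> * (1 / (r^(i+k) - 1))"
      by (rule mult_left_mono[OF S1]) simp
    also have "\<dots> = \<bar>d i * t^(i+k) / (r^(i+k) - 1)\<bar>"
      using Rgt[of i] by (simp add: abs_mult)
    finally show ?thesis .
  qed
  have T: "((\<lambda>N. \<Sum>i. a i N) \<longlongrightarrow> (\<Sum>i. d i * t^(i+k) / (r^(i+k) - 1))) sequentially"
    using tannerys_theorem[where a=a and b="\<lambda>i. d i * t^(i+k) / (r^(i+k) - 1)"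
        and M="\<lambda>i. \<bar>d i * t^(i+k) / (r^(i+k) - 1)\<bar>" and F=sequentially]
    using lim bnd sb by (auto intro: always_eventually)
  have "(\<Sum>i. a i N) = (\<Sum>n<N. \<Sum>i. d i * (t / r^Suc n)^(i+k))" for N
    unfolding a_def by (rule suminf_sum) (rule sn)
  with T show ?thesis by (simp add: sums_def)
qed

theorem lemma3:
  fixes f :: "real \<Rightarrow> real" and c :: "nat \<Rightarrow> real" and x :: real and k :: nat
  assumes anal: "real_analytic_on f {min 0 x .. max 0 x}"
    and nz: "\<forall>y\<in>{min 0 x .. max 0 x}. f y \<noteq> 0"
    and f0: "f 0 = 1"
    and ser: "\<forall>y\<in>{min 0 x .. max 0 x}. summable (\<lambda>i. c (Suc i) * y ^ Suc i)
                 \<and> f y = exp (\<Sum>i. c (Suc i) * y ^ Suc i)"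
    and k: "k \<ge> 1"
  shows "eventually (\<lambda>r. convergent_prod (\<lambda>n.
            f (root k (r ^ k - 1) * x / r ^ Suc n) /
            (\<Prod>i\<in>{1..<k}. component c i (root k (r ^ k - 1) * x / r ^ Suc n))))
          (at_right 1)
       \<and> ((\<lambda>r. \<Prod>n. f (root k (r ^ k - 1) * x / r ^ Suc n) /
            (\<Prod>i\<in>{1..<k}. component c i (root k (r ^ k - 1) * x / r ^ Suc n)))
          \<longlongrightarrow> component c k x) (at_right 1)"
proof -
  obtain m where km: "k = Suc m" using k by (cases k) auto
  have kpos: "0 < k" using k by simp
  define I where "I = {min 0 x .. max 0 x}"
  define d where "d i = c (i + k)" for i
  define A where "A r = root k (r ^ k - 1)" for r
  define b where "b i r = d i * (A r * x)^(i+k) / (r^(i+k) - 1)" for i r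
  define M where "M i = \<bar>d i\<bar> * \<bar>x\<bar>^(i+k) * (1/2)^i" for i
  define P where "P r n = f (A r * x / r ^ Suc n) /
            (\<Prod>i\<in>{1..<k}. component c i (A r * x / r ^ Suc n))" for r n
  have sM: "summable M"
  proof (cases "x = 0")
    case True
    then have "M = (\<lambda>_. 0)" using k by (auto simp: M_def fun_eq_iff)
    then show ?thesis by simp
  next
    case False
    have "x \<in> I" by (simp add: I_def)
    then have "summable (\<lambda>i. c (Suc i) * x ^ Suc i)" using ser by (simp add: I_def)
    then have "summable (\<lambda>n. c n * x ^ n)"
      using summable_Suc_iff[of "\<lambda>n. c n * x ^ n"] by simp
    from powser_insidea[OF this, of "x/2"] False
    have "summable (\<lambda>n. norm (c n * (x/2) ^ n))" by simp
    then have "summable (\<lambda>i. norm (c (i+k) * (x/2) ^ (i+k)))"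
      by (rule summable_ignore_initial_segment)
    then have S: "summable (\<lambda>i. 2^k * norm (c (i+k) * (x/2) ^ (i+k)))"
      by (rule summable_mult)
    have "M = (\<lambda>i. 2^k * norm (c (i+k) * (x/2) ^ (i+k)))"
      by (rule ext) (simp add: M_def d_def abs_mult power_add power_divide power_abs field_simps)
    with S show ?thesis by simp
  qed
  have lim0: "((\<lambda>r. r^k - 1) \<longlongrightarrow> 0) (at_right (1::real))"
  proof -
    have "((\<lambda>r. r^k - 1) \<longlongrightarrow> (1::real)^k - 1) (at_right (1::real))"
      by (intro tendsto_intros)
    then show ?thesis by simp
  qed
  have ev: "eventually (\<lambda>r. 1 < r \<and> r^k - 1 < (1/2)^k) (at_right (1::real))"
    using eventually_at_right_less[of "1::real"] order_tendstoD(2)[OF lim0, of "(1/2)^k"]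
    by (auto elim: eventually_elim2)
  have good: "(\<forall>i. \<bar>b i r\<bar> \<le> M i) \<and> convergent_prod (P r) \<and> prodinf (P r) = exp (\<Sum>i. b i r)"
    if r1: "1 < r" and r2: "r^k - 1 < (1/2)^k" for r
  proof -
    have rk1: "1 \<le> r^k" using r1 by (simp add: one_le_power)
    have A0: "0 \<le> A r" unfolding A_def using rk1 by (simp add: real_root_ge_zero)
    have Ak: "A r ^ k = r^k - 1" unfolding A_def using rk1 kpos by simp
    have Ah: "A r < 1/2"
    proof -
      have "root k (r^k - 1) < root k ((1/2)^k)" using r2 kpos by simp
      also have "root k ((1/2)^k) = (1/2::real)" using kpos by (simp add: real_root_power_cancel)
      finally show ?thesis by (simp add: A_def)
    qed
    have rkpos: "0 < r^k - 1" using r1 kpos by (simp add: one_less_power)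
    have Q: "A r^(i+k) / (r^(i+k) - 1) \<le> A r ^ i" for i
    proof -
      have "r^k \<le> r^(i+k)" using r1 by (intro power_increasing) auto
      then have "A r^(i+k) / (r^(i+k) - 1) \<le> A r^(i+k) / (r^k - 1)"
        using rkpos A0 by (intro divide_left_mono) auto
      also have "\<dots> = A r ^ i" using Ak rkpos by (simp add: power_add)
      finally show ?thesis .
    qed
    have bb: "\<bar>b i r\<bar> \<le> M i" for i
    proof -
      have "\<bar>b i r\<bar> = \<bar>d i\<bar> * \<bar>x\<bar>^(i+k) * (A r^(i+k) / (r^(i+k) - 1))"
        using A0 rkpos r1 by (simp add: b_def abs_mult power_mult_distrib abs_divide one_less_power power_abs)
      also have "\<dots> \<le> \<bar>d i\<bar> * \<bar>x\<bar>^(i+k) * (1/2)^i"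
      proof (rule mult_left_mono)
        show "A r^(i+k) / (r^(i+k) - 1) \<le> (1/2)^i"
          using Q[of i] power_mono[of "A r" "1/2" i] A0 Ah by linarith
      qed simp
      finally show ?thesis by (simp add: M_def)
    qed
    have yI: "A r * x / r ^ Suc n \<in> I" for n
    proof -
      define s where "s = A r / r ^ Suc n"
      have s0: "0 \<le> s" using A0 r1 by (simp add: s_def)
      have "r ^ Suc n \<ge> 1" using r1 by (intro one_le_power) simp
      then have s1: "s \<le> 1" using Ah A0 r1 by (simp add: s_def divide_le_eq)
      have "A r * x / r ^ Suc n = s * x" by (simp add: s_def)
      moreover have "s * x \<in> I"
      proof (cases "x \<ge> 0")
        case True
        then show ?thesis using s0 s1 mult_right_mono[OF s1 True] by (simp add: I_def)
      next
        case False
        then have "s * x \<ge> 1 * x" using s1 by (intro mult_right_mono_neg) auto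
        then show ?thesis using s0 False by (simp add: I_def mult_nonneg_nonpos)
      qed
      ultimately show ?thesis by simp
    qed
    have serI: "summable (\<lambda>i. c (Suc i) * z ^ Suc i) \<and> f z = exp (\<Sum>i. c (Suc i) * z ^ Suc i)"
      if "z \<in> I" for z using ser that by (simp add: I_def)
    define G where "G n = (\<Sum>i. d i * (A r * x / r ^ Suc n)^(i+k))" for n
    have Peq: "P r n = exp (G n)" for n
      using serI[OF yI[of n]] split_id(2)[of c "A r * x / r ^ Suc n" k m] km
      by (simp add: P_def G_def d_def)
    have sn: "summable (\<lambda>i. d i * (A r * x / r^Suc n)^(i+k))" for n
      using serI[OF yI[of n]] split_id(1)[of c "A r * x / r ^ Suc n" k m] km
      by (simp add: d_def)
    have sb: "summable (\<lambda>i. \<bar>d i * (A r * x)^(i+k) / (r^(i+k) - 1)\<bar>)"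
      by (rule summable_comparison_test[OF _ sM]) (use bb in \<open>simp add: b_def\<close>)
    have Gs: "G sums (\<Sum>i. b i r)"
      using inner[OF r1 k sb sn] unfolding G_def b_def .
    have "P r = (\<lambda>n. exp (G n))" using Peq by auto
    then have "convergent_prod (P r) \<and> prodinf (P r) = exp (\<Sum>i. b i r)"
      using convergent_prod_exp[of G] prodinf_exp[of G] Gs by (auto simp: sums_iff)
    then show ?thesis using bb by blast
  qed
  have Alim: "(A \<longlongrightarrow> 0) (at_right 1)"
    unfolding A_def using tendsto_real_root[OF lim0, of k] by simp
  have blim: "((\<lambda>r. b i r) \<longlongrightarrow> (if i = 0 then c k * x^k else 0)) (at_right 1)" for i
  proof (cases "i = 0")
    case True
    have "eventually (\<lambda>r. b i r = c k * x^k) (at_right 1)"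
      using ev
    proof eventually_elim
      case (elim r)
      have rk1: "1 \<le> r^k" using elim by (simp add: one_le_power)
      have Ak: "A r ^ k = r^k - 1" unfolding A_def using rk1 kpos by simp
      have "0 < r^k - 1" using elim kpos by (simp add: one_less_power)
      then show ?case using True Ak by (simp add: b_def d_def power_mult_distrib)
    qed
    then show ?thesis using True by (simp add: tendsto_eventually)
  next
    case False
    have "((\<lambda>r. b i r) \<longlongrightarrow> 0) (at_right 1)"
    proof (rule Lim_null_comparison)
      show "eventually (\<lambda>r. norm (b i r) \<le> \<bar>d i\<bar> * \<bar>x\<bar>^(i+k) * A r ^ i) (at_right 1)"
        using ev
      proof eventually_elim
        case (elim r)
        have rk1: "1 \<le> r^k" using elim by (simp add: one_le_power)
        have A0: "0 \<le> A r" unfolding A_def using rk1 by (simp add: real_root_ge_zero)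
        have Ak: "A r ^ k = r^k - 1" unfolding A_def using rk1 kpos by simp
        have rkpos: "0 < r^k - 1" using elim kpos by (simp add: one_less_power)
        have "r^k \<le> r^(i+k)" using elim by (intro power_increasing) auto
        then have "A r^(i+k) / (r^(i+k) - 1) \<le> A r^(i+k) / (r^k - 1)"
          using rkpos A0 by (intro divide_left_mono) auto
        also have "\<dots> = A r ^ i" using Ak rkpos by (simp add: power_add)
        finally have Q: "A r^(i+k) / (r^(i+k) - 1) \<le> A r ^ i" .
        have "\<bar>b i r\<bar> = \<bar>d i\<bar> * \<bar>x\<bar>^(i+k) * (A r^(i+k) / (r^(i+k) - 1))"
          using A0 rkpos elim by (simp add: b_def abs_mult power_mult_distrib abs_divide one_less_power power_abs)
        also have "\<dots> \<le> \<bar>d i\<bar> * \<bar>x\<bar>^(i+k) * A r ^ i"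
          by (rule mult_left_mono[OF Q]) simp
        finally show ?case by simp
      qed
      have "((\<lambda>r. \<bar>d i\<bar> * \<bar>x\<bar>^(i+k) * A r ^ i) \<longlongrightarrow> \<bar>d i\<bar> * \<bar>x\<bar>^(i+k) * 0 ^ i) (at_right 1)"
        by (intro tendsto_intros Alim)
      then show "((\<lambda>r. \<bar>d i\<bar> * \<bar>x\<bar>^(i+k) * A r ^ i) \<longlongrightarrow> 0) (at_right 1)"
        using False by (simp add: zero_power)
    qed
    then show ?thesis using False by simp
  qed
  have evb: "eventually (\<lambda>r. \<forall>i. norm (b i r) \<le> M i) (at_right (1::real))"
    using ev by eventually_elim (use good in auto)
  have bound: "eventually (\<lambda>(i, r). norm (b i r) \<le> M i) (at_top \<times>\<^sub>F at_right (1::real))"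
  proof -
    have "eventually (\<lambda>(i::nat, r). \<forall>j. norm (b j r) \<le> M j) (at_top \<times>\<^sub>F at_right (1::real))"
      using eventually_prod2[of "at_top :: nat filter" "\<lambda>r. \<forall>j. norm (b j r) \<le> M j" "at_right 1"] evb
      by simp
    then show ?thesis by (rule eventually_mono) auto
  qed
  have Tn: "((\<lambda>r. \<Sum>i. b i r) \<longlongrightarrow> (\<Sum>i. (if i = 0 then c k * x^k else 0))) (at_right 1)"
    using tannerys_theorem[where a=b and b="\<lambda>i. if i = 0 then c k * x^k else 0" and M=M
        and F="at_right 1", OF blim bound sM] by simp
  have "(\<Sum>i. (if i = 0 then c k * x^k else 0)) = c k * x^k"
    using sums_single[of 0 "\<lambda>_. c k * x^k"] by (simp add: sums_iff)
  with Tn have Tn': "((\<lambda>r. exp (\<Sum>i. b i r)) \<longlongrightarrow> component c k x) (at_right 1)"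
    unfolding component_def by (auto intro: tendsto_exp)
  have evP: "eventually (\<lambda>r. convergent_prod (P r) \<and> prodinf (P r) = exp (\<Sum>i. b i r)) (at_right 1)"
    using ev by eventually_elim (use good in auto)
  have "((\<lambda>r. prodinf (P r)) \<longlongrightarrow> component c k x) (at_right 1)"
  proof -
    have "eventually (\<lambda>r. prodinf (P r) = exp (\<Sum>i. b i r)) (at_right 1)"
      using evP by (auto elim: eventually_mono)
    from tendsto_cong[OF this] Tn' show ?thesis by simp
  qed
  moreover have "eventually (\<lambda>r. convergent_prod (P r)) (at_right 1)"
    using evP by (auto elim: eventually_mono)
  ultimately show ?thesis unfolding P_def A_def by simp
qed

end
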